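(* Let $\Lambda\in\mathcal H_I$ and $w$ a capacity. Then for all $X\in\mathcal X$, $$\Lambda\mathrm{VaR}^{w}(X)=\inf_{x\in\mathbb R}\{\mathrm{VaR}^w_{\Lambda(x)}(X)\vee x\}=\sup_{x\in\mathbb R}\{\mathrm{VaR}^w_{\Lambda(x)}(X)\wedge x\}$$ and $$\Lambda\mathrm{VaR}^{+,w}(X)=\inf_{x\in\mathbb R}\{\mathrm{VaR}^{+,w}_{\Lambda(x)}(X)\vee x\}=\sup_{x\in\mathbb R}\{\mathrm{VaR}^{+,w}_{\Lambda(x)}(X)\wedge x\},$$ where values in $[-\infty,\infty]$ are allowed.
   Context: Let $(\Omega,\mathcal F)$ be a measurable space and $\mathcal X$ a set of real-valued random variables on it containing all bounded ones. A capacity is a map $w:\mathcal F\to[0,1]$ with $w(\emptyset)=0$, $w(\Omega)=1$, and $A\subseteq B\Rightarrow w(A)\le w(B)$. For $\Lambda:\mathbb R\to[0,1]$: $\Lambda\mathrm{VaR}^w(X)=\inf\{x\in\mathbb R: w(X>x)\le\Lambda(x)\}$, $\Lambda\mathrm{VaR}^{+,w}(X)=\sup\{x\in\mathbb R: w(X>x)\ge\Lambda(x)\}$ ($\inf\emptyset=\infty$, $\sup\emptyset=-\infty$). For $p\in[0,1]$, the Choquet quantiles are $\mathrm{VaR}^w_p=\Lambda\mathrm{VaR}^w$ and $\mathrm{VaR}^{+,w}_p=\Lambda\mathrm{VaR}^{+,w}$ with the constant function $\Lambda\equiv p$. $\mathcal H_I$ is the set of increasing functions $\Lambda:\mathbb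 R\to(0,1)$. $a\vee b=\max(a,b)$, $a\wedge b=\min(a,b)$. *)

theory Defs
  imports "HOL-Analysis.Analysis"
begin

definition capacity :: "'a measure \<Rightarrow> ('a set \<Rightarrow> real) \<Rightarrow> bool" where
  "capacity M w \<longleftrightarrow>
     (\<forall>A\<in>sets M. 0 \<le> w A \<and> w A \<le> 1) \<and> w {} = 0 \<and> w (space M) = 1 \<and>
     (\<forall>A\<in>sets M. \<forall>B\<in>sets M. A \<subseteq> B \<longrightarrow> w A \<le> w B)"

text \<open>Lambda-VaR with respect to a capacity; values in the extended reals
  (Inf of the empty set is \<infinity>, Sup of the empty set is -\<infinity>).\<close>
definition LVaR :: "'a measure \<Rightarrow> ('a set \<Rightarrow> real) \<Rightarrow> (real \<Rightarrow> real) \<Rightarrow> ('a \<Rightarrow> real) \<Rightarrow> ereal" where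
  "LVaR M w \<Lambda> X = Inf {ereal x | x. w {\<omega> \<in> space M. X \<omega> > x} \<le> \<Lambda> x}"

definition LVaR_plus :: "'a measure \<Rightarrow> ('a set \<Rightarrow> real) \<Rightarrow> (real \<Rightarrow> real) \<Rightarrow> ('a \<Rightarrow> real) \<Rightarrow> ereal" where
  "LVaR_plus M w \<Lambda> X = Sup {ereal x | x. w {\<omega> \<in> space M. X \<omega> > x} \<ge> \<Lambda> x}"

definition VaR :: "'a measure \<Rightarrow> ('a set \<Rightarrow> real) \<Rightarrow> real \<Rightarrow> ('a \<Rightarrow> real) \<Rightarrow> ereal" where
  "VaR M w p X = LVaR M w (\<lambda>_. p) X"

definition VaR_plus :: "'a measure \<Rightarrow> ('a set \<Rightarrow> real) \<Rightarrow> real \<Rightarrow> ('a \<Rightarrow> real) \<Rightarrow> ereal" where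
  "VaR_plus M w p X = LVaR_plus M w (\<lambda>_. p) X"

definition H_I :: "(real \<Rightarrow> real) set" where
  "H_I = {\<Lambda>. mono \<Lambda> \<and> (\<forall>x. 0 < \<Lambda> x \<and> \<Lambda> x < 1)}"

end

theory Submission
  imports Defs
begin

context
  fixes g L :: "real \<Rightarrow> real"
  assumes ganti: "\<And>x y. x \<le> y \<Longrightarrow> g y \<le> g x"
    and Lmono: "\<And>x y. x \<le> y \<Longrightarrow> L x \<le> L y"
begin

definition "SS = Inf {ereal x | x. g x \<le> L x}"
definition "qq p = Inf {ereal x | x. g x \<le> p}"
definition "TT = Sup {ereal x | x. L x \<le> g x}"
definition "qp p = Sup {ereal x | x. p \<le> g x}"

lemma K: assumes "ereal x < SS" shows "SS \<le> qq (L x)"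
  unfolding qq_def
proof (rule Inf_greatest, clarify)
  fix y assume y: "g y \<le> L x"
  show "SS \<le> ereal y"
  proof (rule ccontr)
    assume "\<not> SS \<le> ereal y"
    hence lt: "ereal y < SS" by simp
    show False
    proof (cases "x \<le> y")
      case True
      hence "g y \<le> L y" using y Lmono[of x y] by simp
      hence "SS \<le> ereal y" unfolding SS_def by (intro Inf_lower) auto
      thus False using lt by simp
    next
      case False
      hence "g x \<le> L x" using y ganti[of y x] by simp
      hence "SS \<le> ereal x" unfolding SS_def by (intro Inf_lower) auto
      thus False using assms by simp
    qed
  qed
qed

lemma J: assumes "SS < ereal x" shows "qq (L x) \<le> SS"
proof (rule dense_ge)
  fix z assume z: "SS < z"
  obtain r where r: "SS < ereal r" "ereal r < min z (ereal x)"
    using ereal_dense2[of SS "min z (ereal x)"] z assms by auto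
  then obtain s where s: "s \<in> {ereal x | x. g x \<le> L x}" "s < ereal r"
    unfolding SS_def by (auto simp: Inf_less_iff)
  then obtain t where t: "s = ereal t" "g t \<le> L t" by auto
  have "t < r" "r < x" using s t r by auto
  hence "g r \<le> L x" using ganti[of t r] Lmono[of t x] t by simp
  hence "qq (L x) \<le> ereal r" unfolding qq_def by (intro Inf_lower) auto
  thus "qq (L x) \<le> z" using r by (meson less_imp_le min.strict_boundedE order_trans)
qed

lemma Kp: assumes "TT < ereal x" shows "qp (L x) \<le> TT"
  unfolding qp_def
proof (rule Sup_least, clarify)
  fix y assume y: "L x \<le> g y"
  show "ereal y \<le> TT"
  proof (cases "y \<le> x")
    case True
    hence "L y \<le> g y" using y Lmono[of y x] by simp
    thus ?thesis unfolding TT_def by (intro Sup_upper) auto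
  next
    case False
    hence "L x \<le> g x" using y ganti[of x y] by simp
    hence "ereal x \<le> TT" unfolding TT_def by (intro Sup_upper) auto
    thus ?thesis using assms by simp
  qed
qed

lemma Jp: assumes "ereal x < TT" shows "TT \<le> qp (L x)"
proof (rule dense_le)
  fix z assume z: "z < TT"
  obtain r where r: "max z (ereal x) < ereal r" "ereal r < TT"
    using ereal_dense2[of "max z (ereal x)" TT] z assms by auto
  then obtain s where s: "s \<in> {ereal x | x. L x \<le> g x}" "ereal r < s"
    unfolding TT_def by (auto simp: less_Sup_iff)
  then obtain t where t: "s = ereal t" "L t \<le> g t" by auto
  have "r < t" "x < r" using s t r by auto
  hence "L x \<le> g r" using ganti[of r t] Lmono[of x t] t by simp
  hence "ereal r \<le> qp (L x)" unfolding qp_def by (intro Sup_upper) auto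
  thus "z \<le> qp (L x)" using r by (meson less_imp_le max.strict_boundedE order_trans)
qed

lemma P1: "SS = (INF x. max (qq (L x)) (ereal x))"
proof (rule antisym)
  show "SS \<le> (INF x. max (qq (L x)) (ereal x))"
  proof (rule INF_greatest)
    fix x
    show "SS \<le> max (qq (L x)) (ereal x)"
    proof (cases "SS \<le> ereal x")
      case False thus ?thesis using K[of x] by (intro max.coboundedI1) (simp add: not_le)
    next
      case True thus ?thesis by (intro max.coboundedI2)
    qed
  qed
  show "(INF x. max (qq (L x)) (ereal x)) \<le> SS"
    unfolding SS_def
  proof (rule Inf_greatest, clarify)
    fix x assume x: "g x \<le> L x"
    have "qq (L x) \<le> ereal x" unfolding qq_def using x by (intro Inf_lower) auto
    hence "max (qq (L x)) (ereal x) = ereal x" by simp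
    thus "(INF x. max (qq (L x)) (ereal x)) \<le> ereal x"
      by (intro INF_lower2[of x]) simp_all
  qed
qed

lemma P2: "SS = (SUP x. min (qq (L x)) (ereal x))"
proof (rule antisym)
  show "SS \<le> (SUP x. min (qq (L x)) (ereal x))"
  proof (rule dense_le)
    fix y assume y: "y < SS"
    obtain r where r: "y < ereal r" "ereal r < SS" using ereal_dense2[OF y] by auto
    have "min (qq (L r)) (ereal r) = ereal r" using K[OF r(2)] r(2) by simp
    hence "ereal r \<le> (SUP x. min (qq (L x)) (ereal x))" by (intro SUP_upper2[of r]) simp_all
    thus "y \<le> (SUP x. min (qq (L x)) (ereal x))" using r by simp
  qed
  show "(SUP x. min (qq (L x)) (ereal x)) \<le> SS"
  proof (rule SUP_least)
    fix x
    show "min (qq (L x)) (ereal x) \<le> SS"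
    proof (cases "ereal x \<le> SS")
      case False thus ?thesis using J[of x] by (intro min.coboundedI1) (simp add: not_le)
    next
      case True thus ?thesis by (intro min.coboundedI2)
    qed
  qed
qed

lemma P3: "TT = (INF x. max (qp (L x)) (ereal x))"
proof (rule antisym)
  show "TT \<le> (INF x. max (qp (L x)) (ereal x))"
  proof (rule INF_greatest)
    fix x
    show "TT \<le> max (qp (L x)) (ereal x)"
    proof (cases "TT \<le> ereal x")
      case False thus ?thesis using Jp[of x] by (intro max.coboundedI1) (simp add: not_le)
    next
      case True thus ?thesis by (intro max.coboundedI2)
    qed
  qed
  show "(INF x. max (qp (L x)) (ereal x)) \<le> TT"
  proof (rule dense_ge)
    fix z assume z: "TT < z"
    obtain r where r: "TT < ereal r" "ereal r < z" using ereal_dense2[OF z] by auto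
    have "max (qp (L r)) (ereal r) = ereal r" using Kp[OF r(1)] r(1) by simp
    hence "(INF x. max (qp (L x)) (ereal x)) \<le> ereal r" by (intro INF_lower2[of r]) simp_all
    thus "(INF x. max (qp (L x)) (ereal x)) \<le> z" using r by simp
  qed
qed

lemma P4: "TT = (SUP x. min (qp (L x)) (ereal x))"
proof (rule antisym)
  show "(SUP x. min (qp (L x)) (ereal x)) \<le> TT"
  proof (rule SUP_least)
    fix x
    show "min (qp (L x)) (ereal x) \<le> TT"
    proof (cases "ereal x \<le> TT")
      case False thus ?thesis using Kp[of x] by (intro min.coboundedI1) (simp add: not_le)
    next
      case True thus ?thesis by (intro min.coboundedI2)
    qed
  qed
  show "TT \<le> (SUP x. min (qp (L x)) (ereal x))"
    unfolding TT_def
  proof (rule Sup_least, clarify)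
    fix x assume x: "L x \<le> g x"
    have "ereal x \<le> qp (L x)" unfolding qp_def using x by (intro Sup_upper) auto
    hence "min (qp (L x)) (ereal x) = ereal x" by simp
    thus "ereal x \<le> (SUP x. min (qp (L x)) (ereal x))"
      by (intro SUP_upper2[of x]) simp_all
  qed
qed

end

theorem mainTheorem3:
  fixes M :: "'a measure" and w :: "'a set \<Rightarrow> real" and \<Lambda> :: "real \<Rightarrow> real"
    and X :: "'a \<Rightarrow> real"
  assumes "\<Lambda> \<in> H_I" and "capacity M w" and "X \<in> borel_measurable M"
  shows "LVaR M w \<Lambda> X = (INF x. max (VaR M w (\<Lambda> x) X) (ereal x))
       \<and> LVaR M w \<Lambda> X = (SUP x. min (VaR M w (\<Lambda> x) X) (ereal x))
       \<and> LVaR_plus M w \<Lambda> X = (INF x. max (VaR_plus M w (\<Lambda> x) X) (ereal x))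
       \<and> LVaR_plus M w \<Lambda> X = (SUP x. min (VaR_plus M w (\<Lambda> x) X) (ereal x))"
proof -
  define g where "g x = w {\<omega> \<in> space M. X \<omega> > x}" for x
  have meas: "{\<omega> \<in> space M. X \<omega> > x} \<in> sets M" for x
    using assms(3) unfolding borel_measurable_iff_greater by blast
  have mono_w: "\<forall>A\<in>sets M. \<forall>B\<in>sets M. A \<subseteq> B \<longrightarrow> w A \<le> w B"
    using assms(2) unfolding capacity_def by blast
  have ga: "g y \<le> g x" if "x \<le> y" for x y
  proof -
    have "{\<omega> \<in> space M. X \<omega> > y} \<subseteq> {\<omega> \<in> space M. X \<omega> > x}"
      using that by auto
    thus ?thesis unfolding g_def using mono_w meas[of x] meas[of y] by blast
  qed
  have Lm: "\<Lambda> x \<le> \<Lambda> y" if "x \<le> y" for x y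
    using assms(1) that unfolding H_I_def by (auto dest: monoD)
  have e1: "LVaR M w \<Lambda> X = SS g \<Lambda>" unfolding LVaR_def by (simp add: SS_def[OF ga Lm] g_def)
  have e2: "VaR M w p X = qq g p" for p unfolding VaR_def LVaR_def by (simp add: qq_def[OF ga Lm] g_def)
  have e3: "LVaR_plus M w \<Lambda> X = TT g \<Lambda>" unfolding LVaR_plus_def by (simp add: TT_def[OF ga Lm] g_def)
  have e4: "VaR_plus M w p X = qp g p" for p unfolding VaR_plus_def LVaR_plus_def by (simp add: qp_def[OF ga Lm] g_def)
  show ?thesis unfolding e1 e2 e3 e4
    by (intro conjI P1[of g \<Lambda>, OF ga Lm] P2[of g \<Lambda>, OF ga Lm] P3[of g \<Lambda>, OF ga Lm] P4[of g \<Lambda>, OF ga Lm])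
qed

end
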